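(* Let $m\ge1$ and let $\alpha\subseteq\langle 2m\rangle$ be a $2m$-element subset of weight zero, i.e. $\alpha=\{\bar\alpha_m,\dots,\bar\alpha_1,\alpha_1,\dots,\alpha_m\}$ with positive part $\alpha_+=\{\alpha_1<\dots<\alpha_m\}\subseteq[2m]$. If $\alpha$ is Northeast, then $\alpha_+\ge(2,4,\dots,2m)$ in $\binom{[2m]}{m}$, i.e. $\alpha_i\ge 2i$ for $i=1,\dots,m$. In particular $1\notin\alpha_+$ and $2m\in\alpha_+$.
   Context: $\langle 2m\rangle=\{\overline{2m}<\dots<\bar1<1<\dots<2m\}$ with $\bar\imath=-i$; $\binom{[2m]}{m}$ is ordered componentwise on increasing sequences. A $2m$-element subset of $\langle 2m\rangle$ corresponds to a partition in the $2m\times 2m$ square via the lattice path from the lower-left to the upper-right corner whose $j$-th step is upward if the $j$-th smallest element of $\langle 2m\rangle$ lies in the subset and rightward otherwise (the partition being the boxes between the path and the top and left edges). Such a partition $\lambda$ (boxes indexed (row from top, column from left)) is Northeast if for every box $(r,c)\in\lambda$ with $r>c$, the box $(c,r)$ also lies in $\lambda$. *)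

theory Defs
  imports Main
begin

text \<open>The signed alphabet <2m> = {-2m < ... < -1 < 1 < ... < 2m}, modelled inside int
  (the barred element i-bar is -i).\<close>
definition signed_alph :: "nat \<Rightarrow> int set" where
  "signed_alph m = {-(2 * int m)..-1} \<union> {1..2 * int m}"

definition pos_part :: "int set \<Rightarrow> int set" where
  "pos_part A = {x \<in> A. x > 0}"

definition weight_zero :: "int set \<Rightarrow> bool" where
  "weight_zero A \<longleftrightarrow> (\<forall>x\<in>A. -x \<in> A)"

text \<open>Box (r,c) (row from top, column from left, 1-based) of the partition in the
  2m x 2m square associated with the subset A of <2m>.  The lattice path goes up at
  its j-th step iff the j-th smallest element of <2m> lies in A, and right otherwise.
  The c-th right step is the step for the c-th smallest element y of <2m> \ A, and it
  runs at height h = #{x in A. x < y}.  The box (r,c) lies between the path and the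
  top/left edges iff its bottom edge, at height 2m - r, is at or above h.\<close>
definition in_partition :: "nat \<Rightarrow> int set \<Rightarrow> nat \<times> nat \<Rightarrow> bool" where
  "in_partition m A rc = (case rc of (r, c) \<Rightarrow>
     1 \<le> r \<and> r \<le> 2 * m \<and> 1 \<le> c \<and> c \<le> 2 * m \<and>
     r + card {x \<in> A. x < sorted_list_of_set (signed_alph m - A) ! (c - 1)} \<le> 2 * m)"

definition northeast :: "nat \<Rightarrow> int set \<Rightarrow> bool" where
  "northeast m A \<longleftrightarrow>
     (\<forall>r c. in_partition m A (r, c) \<and> r > c \<longrightarrow> in_partition m A (c, r))"

end

theory Submission imports Defs begin
lemma sl_card_less:
  fixes S :: "int set"
  assumes "finite S" "k < card S"
  shows "card {s\<in>S. s < sorted_list_of_set S ! k} = k"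
proof -
  define xs where "xs = sorted_list_of_set S"
  have st: "sorted_wrt (<) xs" unfolding xs_def by simp
  have len: "length xs = card S" unfolding xs_def by simp
  have set: "set xs = S" unfolding xs_def using assms by simp
  have lt: "\<And>i j. i < length xs \<Longrightarrow> j < length xs \<Longrightarrow> xs!i < xs!j \<longleftrightarrow> i < j"
    using st by (metis linorder_neqE_nat not_less_iff_gr_or_eq sorted_wrt_nth_less)
  have "{s\<in>S. s < xs ! k} = (\<lambda>i. xs!i) ` {..<k}"
  proof
    show "{s\<in>S. s < xs ! k} \<subseteq> (\<lambda>i. xs!i) ` {..<k}"
    proof
      fix s assume "s \<in> {s\<in>S. s < xs ! k}"
      then obtain i where "i < length xs" "s = xs!i" "s < xs!k" using set by (auto simp: in_set_conv_nth)
      then show "s \<in> (\<lambda>i. xs!i) ` {..<k}" using lt assms len by auto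
    qed
    show "(\<lambda>i. xs!i) ` {..<k} \<subseteq> {s\<in>S. s < xs ! k}"
      using lt assms len set by auto
  qed
  moreover have "inj_on (\<lambda>i. xs!i) {..<k}"
    using lt assms len by (intro inj_onI) (metis lessThan_iff less_irrefl order.strict_trans nat_neq_iff)
  ultimately show ?thesis unfolding xs_def by (simp add: card_image)
qed

lemma sl_nth_card:
  fixes S :: "int set"
  assumes "finite S" "y \<in> S"
  shows "sorted_list_of_set S ! card {s\<in>S. s < y} = y"
proof -
  obtain k where k: "k < length (sorted_list_of_set S)" "sorted_list_of_set S ! k = y"
    using assms by (metis in_set_conv_nth set_sorted_list_of_set)
  then have "k < card S" by simp
  then show ?thesis using sl_card_less[OF assms(1)] k by metis
qed

theorem proposition5p4:
  fixes m :: nat and \<alpha> :: "int set"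
  assumes "m \<ge> 1"
    and "\<alpha> \<subseteq> signed_alph m"
    and "card \<alpha> = 2 * m"
    and "weight_zero \<alpha>"
    and "northeast m \<alpha>"
  shows "(\<forall>i\<in>{1..m}. sorted_list_of_set (pos_part \<alpha>) ! (i - 1) \<ge> 2 * int i)
         \<and> 1 \<notin> pos_part \<alpha> \<and> 2 * int m \<in> pos_part \<alpha>"
proof -
  define P where "P = pos_part \<alpha>"
  define Q where "Q = {1..2 * int m} - P"
  define C where "C = signed_alph m - \<alpha>"
  have wz: "\<And>x. x \<in> \<alpha> \<Longrightarrow> -x \<in> \<alpha>" using assms(4) unfolding weight_zero_def by blast
  have sa: "\<And>x. x \<in> signed_alph m \<longleftrightarrow> (-(2*int m) \<le> x \<and> x \<le> -1) \<or> (1 \<le> x \<and> x \<le> 2 * int m)"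
    unfolding signed_alph_def by auto
  have finsa: "finite (signed_alph m)" unfolding signed_alph_def by simp
  have fina: "finite \<alpha>" using assms(2) finsa finite_subset by blast
  have Pdef: "\<And>x. x \<in> P \<longleftrightarrow> x \<in> \<alpha> \<and> x > 0" unfolding P_def pos_part_def by auto
  have Psub: "P \<subseteq> {1..2 * int m}" using Pdef assms(2) sa by fastforce
  have finP: "finite P" using Psub finite_subset by blast
  have finQ: "finite Q" unfolding Q_def by simp
  have finC: "finite C" unfolding C_def using finsa by simp
  have asplit: "\<alpha> = P \<union> uminus ` P"
  proof
    show "\<alpha> \<subseteq> P \<union> uminus ` P"
    proof
      fix x assume x: "x \<in> \<alpha>"
      have "x \<noteq> 0" using x assms(2) sa by fastforce
      show "x \<in> P \<union> uminus ` P"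
      proof (cases "x > 0")
        case True then show ?thesis using Pdef x by auto
      next
        case False
        then have "-x \<in> P" using Pdef wz x \<open>x \<noteq> 0\<close> by auto
        then show ?thesis by (metis UnI2 image_eqI minus_minus)
      qed
    qed
    show "P \<union> uminus ` P \<subseteq> \<alpha>" using Pdef wz by auto
  qed
  have "card \<alpha> = card P + card (uminus ` P)"
  proof -
    have d: "P \<inter> uminus ` P = {}" using Pdef by force
    show ?thesis unfolding asplit using card_Un_disjoint[OF finP _ d] finP by blast
  qed
  moreover have "card (uminus ` P) = card P" by (rule card_image) (simp add: inj_on_def)
  ultimately have cardP: "card P = m" using assms(3) by simp
  have cardQ: "card Q = m" unfolding Q_def using card_Diff_subset[OF finP Psub] cardP by simp
  have Qdef: "x \<in> Q \<longleftrightarrow> 1 \<le> x \<and> x \<le> 2 * int m \<and> x \<notin> \<alpha>" for x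
  proof -
    have "x \<in> Q \<longleftrightarrow> 1 \<le> x \<and> x \<le> 2 * int m \<and> x \<notin> P" unfolding Q_def by simp
    then show ?thesis using Pdef[of x] by linarith
  qed
  have Cneg: "x \<in> C \<longleftrightarrow> -x \<in> Q" if x0: "x < 0" for x
  proof -
    have "x \<in> \<alpha> \<longleftrightarrow> -x \<in> \<alpha>" using wz by force
    then show ?thesis unfolding C_def using Qdef[of "-x"] sa[of x] x0 by auto
  qed
  have Cpos: "x \<in> C \<longleftrightarrow> x \<in> Q" if "x > 0" for x
    unfolding C_def using Qdef[of x] sa[of x] that by auto
  have C0: "0 \<notin> C" unfolding C_def using sa[of 0] by auto
  have key: False if a0: "a \<ge> 0" and ak: "a < 2 * int (card {x\<in>P. x \<le> a})" for a :: int
  proof -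
    define k where "k = card {x\<in>P. x \<le> a}"
    have km: "k \<le> m" unfolding k_def using cardP finP by (metis (no_types, lifting) card_mono mem_Collect_eq subsetI)
    have a2m: "a \<le> 2 * int m" using ak km unfolding k_def by linarith
    have un: "{1..a} = {x\<in>P. x \<le> a} \<union> {q\<in>Q. q \<le> a}" using Psub Qdef Pdef a2m by auto
    have "card {1..a} = k + card {q\<in>Q. q \<le> a}"
      unfolding un k_def
    proof (rule card_Un_disjoint)
      show "finite {x\<in>P. x \<le> a}" using finP by simp
      show "finite {q\<in>Q. q \<le> a}" using finQ by simp
      show "{x\<in>P. x \<le> a} \<inter> {q\<in>Q. q \<le> a} = {}" using Q_def by auto
    qed
    then have cQa: "card {q\<in>Q. q \<le> a} = nat a - k" by simp
    define j0 where "j0 = nat a - k"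
    have j0k: "j0 < k" unfolding j0_def using ak k_def a0 by linarith
    define y where "y = sorted_list_of_set Q ! j0"
    have yQ: "y \<in> Q" unfolding y_def using j0k km cardQ finQ
      by (metis length_sorted_list_of_set nth_mem order_less_le_trans set_sorted_list_of_set)
    have cy: "card {q\<in>Q. q < y} = j0" unfolding y_def using sl_card_less[OF finQ] j0k km cardQ by simp
    have ya: "y > a"
    proof (rule ccontr)
      assume "\<not> y > a"
      then have "insert y {q\<in>Q. q < y} \<subseteq> {q\<in>Q. q \<le> a}" using yQ by auto
      then have "card (insert y {q\<in>Q. q < y}) \<le> card {q\<in>Q. q \<le> a}" using finQ by (intro card_mono) auto
      then show False using cy cQa j0_def finQ by simp
    qed
    define A where "A = card {p\<in>P. p < y}"
    have Ak: "k \<le> A" unfolding A_def k_def using finP ya by (intro card_mono) auto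
    have QU: "Q = {q\<in>Q. q < y} \<union> insert y {q\<in>Q. q > y}" using yQ by auto
    have f1: "finite {q\<in>Q. q < y}" using finQ by simp
    have f2: "finite {q\<in>Q. q > y}" using finQ by simp
    have d1: "{q\<in>Q. q < y} \<inter> insert y {q\<in>Q. q > y} = {}" by auto
    have "card Q = card {q\<in>Q. q < y} + card (insert y {q\<in>Q. q > y})"
      by (subst QU) (rule card_Un_disjoint[OF f1 _ d1], use f2 in simp)
    also have "card (insert y {q\<in>Q. q > y}) = Suc (card {q\<in>Q. q > y})" using f2 by simp
    finally have "card Q = j0 + Suc (card {q\<in>Q. q > y})" using cy by simp
    then have cgt: "card {q\<in>Q. q > y} = m - j0 - 1" using cardQ by simp
    have y0: "y > 0" using yQ Qdef by auto
    have "{s\<in>C. s < -y} = uminus ` {q\<in>Q. q > y}"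
    proof
      show "{s\<in>C. s < -y} \<subseteq> uminus ` {q\<in>Q. q > y}"
      proof
        fix s assume s: "s \<in> {s\<in>C. s < -y}"
        then have "s < 0" using y0 by auto
        then have "-s \<in> Q" "-s > y" using Cneg s by auto
        then show "s \<in> uminus ` {q\<in>Q. q > y}" by (metis (mono_tags, lifting) image_eqI mem_Collect_eq minus_minus)
      qed
      show "uminus ` {q\<in>Q. q > y} \<subseteq> {s\<in>C. s < -y}"
        using Cneg Qdef y0 by auto
    qed
    then have c1: "card {s\<in>C. s < -y} = m - j0 - 1" using cgt by (simp add: card_image)
    have "-y \<in> C" using Cneg yQ y0 by simp
    then have e1: "sorted_list_of_set C ! (m - j0 - 1) = -y" using sl_nth_card[OF finC] c1 by metis
    have "{s\<in>C. s < y} = uminus ` Q \<union> {q\<in>Q. q < y}"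
    proof
      show "{s\<in>C. s < y} \<subseteq> uminus ` Q \<union> {q\<in>Q. q < y}"
      proof
        fix s assume s: "s \<in> {s\<in>C. s < y}"
        show "s \<in> uminus ` Q \<union> {q\<in>Q. q < y}"
        proof (cases "s < 0")
          case True then have "-s \<in> Q" using Cneg s by auto
          then show ?thesis by (metis UnI1 image_eqI minus_minus)
        next
          case False then have "s > 0" using C0 s by (cases "s = 0") auto
          then show ?thesis using Cpos s by auto
        qed
      qed
      show "uminus ` Q \<union> {q\<in>Q. q < y} \<subseteq> {s\<in>C. s < y}"
        using Cneg Cpos Qdef y0 by auto
    qed
    moreover have "card (uminus ` Q \<union> {q\<in>Q. q < y}) = card (uminus ` Q) + card {q\<in>Q. q < y}"
    proof (rule card_Un_disjoint)
      show "uminus ` Q \<inter> {q\<in>Q. q < y} = {}"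
      proof -
        have "\<forall>z\<in>Q. z > 0" using Qdef by auto
        show ?thesis
        proof (intro equalityI subsetI)
          fix z assume z: "z \<in> uminus ` Q \<inter> {q\<in>Q. q < y}"
          then obtain q where "q \<in> Q" "z = -q" "z \<in> Q" by auto
          then have "q > 0" "z > 0" using \<open>\<forall>z\<in>Q. z > 0\<close> by auto
          then show "z \<in> {}" using \<open>z = -q\<close> by simp
        qed simp
      qed
    qed (use finQ f1 in auto)
    moreover have "card (uminus ` Q) = m" using cardQ by (simp add: card_image)
    ultimately have c2: "card {s\<in>C. s < y} = m + j0" using cy by simp
    have yC: "y \<in> C" using Cpos[OF y0] yQ by simp
    have e2: "sorted_list_of_set C ! (m + j0) = y" using sl_nth_card[OF finC yC] c2 by simp
    have "{x\<in>\<alpha>. x < -y} = uminus ` {p\<in>P. p > y}"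
    proof
      show "{x\<in>\<alpha>. x < -y} \<subseteq> uminus ` {p\<in>P. p > y}"
      proof
        fix x assume x: "x \<in> {x\<in>\<alpha>. x < -y}"
        then have "-x \<in> P" "-x > y" using Pdef wz y0 by auto
        then show "x \<in> uminus ` {p\<in>P. p > y}" by (metis (mono_tags, lifting) image_eqI mem_Collect_eq minus_minus)
      qed
      show "uminus ` {p\<in>P. p > y} \<subseteq> {x\<in>\<alpha>. x < -y}" using Pdef wz by auto
    qed
    then have h1e: "card {x\<in>\<alpha>. x < -y} = card {p\<in>P. p > y}" by (simp add: card_image)
    have "card ({p\<in>P. p > y} \<union> {p\<in>P. p < y}) = card {p\<in>P. p > y} + A"
      unfolding A_def by (rule card_Un_disjoint) (use finP in auto)
    moreover have "card ({p\<in>P. p > y} \<union> {p\<in>P. p < y}) \<le> card P" using finP by (intro card_mono) auto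
    ultimately have h1: "card {x\<in>\<alpha>. x < -y} + A \<le> m" using h1e cardP by simp
    have Ppos: "\<forall>z\<in>P. z > 0" using Pdef by auto
    have "uminus ` P \<union> {p\<in>P. p < y} \<subseteq> {x\<in>\<alpha>. x < y}"
    proof
      fix z assume "z \<in> uminus ` P \<union> {p\<in>P. p < y}"
      then consider (a) q where "q \<in> P" "z = -q" | (b) "z \<in> P" "z < y" by auto
      then show "z \<in> {x\<in>\<alpha>. x < y}"
      proof cases
        case a then show ?thesis using Pdef[of q] wz[of q] y0 by auto
      next
        case b then show ?thesis using Pdef[of z] by auto
      qed
    qed
    then have "card (uminus ` P \<union> {p\<in>P. p < y}) \<le> card {x\<in>\<alpha>. x < y}" using fina by (intro card_mono) auto
    moreover have "card (uminus ` P \<union> {p\<in>P. p < y}) = card (uminus ` P) + A"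
      unfolding A_def
    proof (rule card_Un_disjoint)
      show "uminus ` P \<inter> {p\<in>P. p < y} = {}"
      proof (intro equalityI subsetI)
        fix z assume z: "z \<in> uminus ` P \<inter> {p\<in>P. p < y}"
        then obtain q where "q \<in> P" "z = -q" "z \<in> P" by auto
        then have "q > 0" "z > 0" using Ppos by auto
        then show "z \<in> {}" using \<open>z = -q\<close> by simp
      qed simp
    qed (use finP in auto)
    moreover have "card (uminus ` P) = m" using cardP by (simp add: card_image)
    ultimately have h2: "m + A \<le> card {x\<in>\<alpha>. x < y}" by simp
    have ip: "in_partition m \<alpha> (m + j0 + 1, m - j0)"
      unfolding in_partition_def prod.case C_def[symmetric] e1 using j0k km h1 Ak by auto
    then have "in_partition m \<alpha> (m - j0, m + j0 + 1)" using assms(5) unfolding northeast_def using j0k km by auto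
    then show False unfolding in_partition_def prod.case C_def[symmetric] add_diff_cancel_right' e2 using h2 Ak j0k by auto
  qed
  define p where "p = sorted_list_of_set P"
  have g1: "\<forall>i\<in>{1..m}. p ! (i - 1) \<ge> 2 * int i"
  proof
    fix i assume i: "i \<in> {1..m}"
    define a where "a = p ! (i - 1)"
    have aP: "a \<in> P" unfolding a_def p_def using i cardP finP
      by (metis atLeastAtMost_iff diff_less length_sorted_list_of_set less_le_trans nth_mem set_sorted_list_of_set zero_less_one le_less)
    have "i - 1 < m" using i by auto
    then have "card {x\<in>P. x < a} = i - 1" unfolding a_def p_def using sl_card_less[OF finP, of "i - 1"] cardP by simp
    moreover have "{x\<in>P. x \<le> a} = insert a {x\<in>P. x < a}" using aP by auto
    ultimately have "card {x\<in>P. x \<le> a} = i" using finP i by simp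
    moreover have "a \<ge> 0" using aP Pdef by auto
    ultimately show "p ! (i - 1) \<ge> 2 * int i" using key unfolding a_def by (metis not_le)
  qed
  have g2: "1 \<notin> P"
  proof
    assume "1 \<in> P"
    then have "{x\<in>P. x \<le> 1} = {1}" using Pdef by force
    then show False using key[of 1] by simp
  qed
  have g3: "2 * int m \<in> P"
  proof (rule ccontr)
    assume "2 * int m \<notin> P"
    then have "\<forall>x\<in>P. x \<le> 2 * int m - 1" using Psub by (metis atLeastAtMost_iff order_le_less subsetD zle_diff1_eq)
    then have "{x\<in>P. x \<le> 2 * int m - 1} = P" by auto
    then show False using key[of "2 * int m - 1"] cardP assms(1) by simp
  qed
  show ?thesis using g1 g2 g3 unfolding p_def P_def by blast
qed
end
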